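(* Let $s(x)\in\Omega$ be a generalized power series with $\dim_{\mathbb{Q}}\langle\operatorname{supp}s(x)\rangle>n$. Then $s(x)$ is not a solution of any nontrivial equation $P=0$ of order $n$ with constant coefficients, i.e. there is no non-zero $P\in\mathbb{C}[y_0,\ldots,y_n]$ with $P(s(x),s'(x),\ldots,s^{(n)}(x))=0$.
   Context: $\Omega$ denotes the field of generalized power series $s(x)=\sum_{i\ge1}c_i x^{\mu_i}$ with $c_i\in\mathbb{C}$, $\mu_i\in\mathbb{R}$, $\mu_1<\mu_2<\cdots$ and $\mu_i\to\infty$ when there are infinitely many terms; $\operatorname{supp}s=\{\mu_i:c_i\ne0\}$. For $E\subset\mathbb{R}$, $\langle E\rangle$ is the $\mathbb{Q}$-linear span of $E$ in $\mathbb{R}$. The operator $'$ is one fixed choice among: (a) ordinary derivative $\frac{d}{dx}$; (b) Euler derivative $x\frac{d}{dx}$; (c) $q$-difference operator $s'(x)=s(qx)$, i.e. $\sum c_ix^{\mu_i}\mapsto\sum c_iq^{\mu_i}x^{\mu_i}$, for fixed $q\in\mathbb{C}$, $|q|\ne1$. $s^{(\kappa)}$ is the $\kappa$-th iterate of $'$. *)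

theory Defs
  imports "HOL-Analysis.Analysis"
begin

text \<open>A generalized power series sum c_i x^mu_i is represented by its coefficient
  function c :: real => complex (coefficient of x^mu).  The conditions
  mu_1 < mu_2 < ... and mu_i -> infinity (if infinitely many terms) say exactly that
  the support meets every half-line (-inf, M] in a finite set.\<close>

type_synonym gps = "real \<Rightarrow> complex"

definition gps_supp :: "gps \<Rightarrow> real set" where
  "gps_supp s = {\<mu>. s \<mu> \<noteq> 0}"

definition is_gps :: "gps \<Rightarrow> bool" where
  "is_gps s \<longleftrightarrow> (\<forall>M. finite {\<mu> \<in> gps_supp s. \<mu> \<le> M})"

definition gps_one :: gps where
  "gps_one = (\<lambda>\<mu>. if \<mu> = 0 then 1 else 0)"

definition gps_times :: "gps \<Rightarrow> gps \<Rightarrow> gps" where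
  "gps_times a b = (\<lambda>\<mu>. \<Sum>\<alpha> \<in> {\<alpha> \<in> gps_supp a. \<mu> - \<alpha> \<in> gps_supp b}. a \<alpha> * b (\<mu> - \<alpha>))"

definition gps_pow :: "gps \<Rightarrow> nat \<Rightarrow> gps" where
  "gps_pow a k = (gps_times a ^^ k) gps_one"

datatype opkind = Deriv | Euler | QDiff complex

definition gps_op :: "opkind \<Rightarrow> gps \<Rightarrow> gps" where
  "gps_op k s = (case k of
      Deriv \<Rightarrow> (\<lambda>\<mu>. complex_of_real (\<mu> + 1) * s (\<mu> + 1))
    | Euler \<Rightarrow> (\<lambda>\<mu>. complex_of_real \<mu> * s \<mu>)
    | QDiff q \<Rightarrow> (\<lambda>\<mu>. q powr complex_of_real \<mu> * s \<mu>))"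

definition admissible_op :: "opkind \<Rightarrow> bool" where
  "admissible_op k \<longleftrightarrow> (\<forall>q. k = QDiff q \<longrightarrow> q \<noteq> 0 \<and> norm q \<noteq> 1)"

text \<open>Polynomials in y_0..y_n with complex coefficients: coefficient function on
  exponent vectors (lists of length n+1), finitely supported.\<close>

definition is_poly_order :: "nat \<Rightarrow> (nat list \<Rightarrow> complex) \<Rightarrow> bool" where
  "is_poly_order n P \<longleftrightarrow> finite {\<alpha>. P \<alpha> \<noteq> 0} \<and> (\<forall>\<alpha>. P \<alpha> \<noteq> 0 \<longrightarrow> length \<alpha> = Suc n)"

definition gps_monomial :: "opkind \<Rightarrow> gps \<Rightarrow> nat list \<Rightarrow> gps" where
  "gps_monomial k s \<alpha> =
     foldr (\<lambda>i acc. gps_times (gps_pow ((gps_op k ^^ i) s) (\<alpha> ! i)) acc) [0..<length \<alpha>] gps_one"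

definition gps_eval :: "opkind \<Rightarrow> (nat list \<Rightarrow> complex) \<Rightarrow> gps \<Rightarrow> gps" where
  "gps_eval k P s = (\<lambda>\<mu>. \<Sum>\<alpha> \<in> {\<alpha>. P \<alpha> \<noteq> 0}. P \<alpha> * gps_monomial k s \<alpha> \<mu>)"

definition rat_indep :: "real set \<Rightarrow> bool" where
  "rat_indep B \<longleftrightarrow> (\<forall>r :: real \<Rightarrow> rat. (\<Sum>b\<in>B. real_of_rat (r b) * b) = 0 \<longrightarrow> (\<forall>b\<in>B. r b = 0))"

definition qdim_gt :: "real set \<Rightarrow> nat \<Rightarrow> bool" where
  "qdim_gt E n \<longleftrightarrow> (\<exists>B \<subseteq> E. finite B \<and> card B = Suc n \<and> rat_indep B)"

end

theory Submission
  imports Defs "HOL-Computational_Algebra.Polynomial"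
begin

lemma supp_iff[simp]: "\<mu> \<in> gps_supp s \<longleftrightarrow> s \<mu> \<noteq> 0"
  by (simp add: gps_supp_def)

lemma gps_min:
  assumes "is_gps a" "\<mu>0 \<in> gps_supp a"
  shows "\<exists>m\<in>gps_supp a. \<forall>\<mu>\<in>gps_supp a. m \<le> \<mu>"
proof -
  let ?S = "{\<mu> \<in> gps_supp a. \<mu> \<le> \<mu>0}"
  have f: "finite ?S" using assms(1) by (simp add: is_gps_def)
  have ne: "?S \<noteq> {}" using assms(2) by auto
  show ?thesis
  proof (intro bexI ballI)
    show "Min ?S \<in> gps_supp a" using Min_in[OF f ne] by auto
    fix \<mu> assume "\<mu> \<in> gps_supp a"
    then show "Min ?S \<le> \<mu>"
      by (cases "\<mu> \<le> \<mu>0") (use f ne Min_le[OF f] Min_in[OF f ne] in auto)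
  qed
qed

lemma gps_lower_bound:
  assumes "is_gps a"
  shows "\<exists>m. \<forall>\<mu>\<in>gps_supp a. m \<le> \<mu>"
  using gps_min[OF assms] by (cases "gps_supp a = {}") blast+

lemma gps_finite_le:
  assumes "is_gps a" shows "finite {\<mu>. a \<mu> \<noteq> 0 \<and> \<mu> \<le> M}"
  using assms unfolding is_gps_def gps_supp_def by auto

lemma times_set_finite:
  assumes "is_gps a" "is_gps b"
  shows "finite {\<alpha> \<in> gps_supp a. \<mu> - \<alpha> \<in> gps_supp b}"
proof -
  obtain mb where mb: "\<forall>\<beta>\<in>gps_supp b. mb \<le> \<beta>" using gps_lower_bound[OF assms(2)] by blast
  have "{\<alpha> \<in> gps_supp a. \<mu> - \<alpha> \<in> gps_supp b} \<subseteq> {\<alpha>. a \<alpha> \<noteq> 0 \<and> \<alpha> \<le> \<mu> - mb}"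
    using mb by force
  then show ?thesis using gps_finite_le[OF assms(1)] finite_subset by blast
qed

lemma gps_times_eq:
  assumes "finite S" "{\<alpha> \<in> gps_supp a. \<mu> - \<alpha> \<in> gps_supp b} \<subseteq> S"
  shows "gps_times a b \<mu> = (\<Sum>\<alpha>\<in>S. a \<alpha> * b (\<mu> - \<alpha>))"
  unfolding gps_times_def
  by (rule sum.mono_neutral_left[OF assms]) auto

lemma gps_times_single:
  assumes "{\<alpha> \<in> gps_supp a. \<mu> - \<alpha> \<in> gps_supp b} \<subseteq> {\<beta>}"
  shows "gps_times a b \<mu> = a \<beta> * b (\<mu> - \<beta>)"
  using gps_times_eq[OF _ assms] by simp

lemma is_gps_times:
  assumes "is_gps a" "is_gps b" shows "is_gps (gps_times a b)"
  unfolding is_gps_def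
proof
  fix M
  obtain ma where ma: "\<forall>\<beta>\<in>gps_supp a. ma \<le> \<beta>" using gps_lower_bound[OF assms(1)] by blast
  obtain mb where mb: "\<forall>\<beta>\<in>gps_supp b. mb \<le> \<beta>" using gps_lower_bound[OF assms(2)] by blast
  let ?A = "{\<alpha>. a \<alpha> \<noteq> 0 \<and> \<alpha> \<le> M - mb}" and ?B = "{\<beta>. b \<beta> \<noteq> 0 \<and> \<beta> \<le> M - ma}"
  have "{\<mu> \<in> gps_supp (gps_times a b). \<mu> \<le> M} \<subseteq> (\<lambda>(x,y). x + y) ` (?A \<times> ?B)"
  proof
    fix \<mu> assume h: "\<mu> \<in> {\<mu> \<in> gps_supp (gps_times a b). \<mu> \<le> M}"
    then have "gps_times a b \<mu> \<noteq> 0" by simp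
    then obtain \<alpha> where "\<alpha> \<in> gps_supp a" "\<mu> - \<alpha> \<in> gps_supp b"
      unfolding gps_times_def by (metis (no_types, lifting) empty_iff mem_Collect_eq sum.empty sum.neutral)
    moreover have "\<alpha> \<le> M - mb" "\<mu> - \<alpha> \<le> M - ma" using h mb ma calculation by force+
    ultimately show "\<mu> \<in> (\<lambda>(x,y). x + y) ` (?A \<times> ?B)"
      by (intro image_eqI[of _ _ "(\<alpha>, \<mu> - \<alpha>)"]) auto
  qed
  moreover have "finite ((\<lambda>(x,y). x + y) ` (?A \<times> ?B))"
    using gps_finite_le[OF assms(1)] gps_finite_le[OF assms(2)] by auto
  ultimately show "finite {\<mu> \<in> gps_supp (gps_times a b). \<mu> \<le> M}" using finite_subset by blast
qed

lemma is_gps_subset: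
  assumes "is_gps a" "\<And>\<mu>. b \<mu> \<noteq> 0 \<Longrightarrow> a \<mu> \<noteq> 0" shows "is_gps b"
  using assms unfolding is_gps_def gps_supp_def
  by (metis (mono_tags, lifting) finite_subset mem_Collect_eq subsetI)

lemma is_gps_add:
  assumes "is_gps a" "is_gps b" shows "is_gps (\<lambda>\<mu>. a \<mu> + b \<mu>)"
proof -
  have "{\<mu> \<in> gps_supp (\<lambda>\<mu>. a \<mu> + b \<mu>). \<mu> \<le> M} \<subseteq> {\<mu>. a \<mu> \<noteq> 0 \<and> \<mu> \<le> M} \<union> {\<mu>. b \<mu> \<noteq> 0 \<and> \<mu> \<le> M}" for M
    by auto
  then show ?thesis unfolding is_gps_def
    using gps_finite_le[OF assms(1)] gps_finite_le[OF assms(2)] by (meson finite_Un finite_subset)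
qed

lemma is_gps_zero: "is_gps (\<lambda>_. 0)" by (simp add: is_gps_def gps_supp_def)
lemma is_gps_one: "is_gps gps_one"
  by (rule is_gps_subset[of "\<lambda>\<mu>. if \<mu> = 0 then 1 else 0"]) (auto simp: is_gps_def gps_supp_def gps_one_def)
lemma is_gps_scale: "is_gps a \<Longrightarrow> is_gps (\<lambda>\<mu>. c \<mu> * a \<mu>)"
  by (rule is_gps_subset) auto

lemma gps_times_comm:
  assumes "is_gps a" "is_gps b" shows "gps_times a b = gps_times b a"
proof
  fix \<mu>
  have "gps_times a b \<mu> = (\<Sum>\<alpha>\<in>{\<alpha> \<in> gps_supp a. \<mu> - \<alpha> \<in> gps_supp b}. a \<alpha> * b (\<mu> - \<alpha>))"
    by (simp add: gps_times_def)
  also have "\<dots> = (\<Sum>\<beta>\<in>{\<beta> \<in> gps_supp b. \<mu> - \<beta> \<in> gps_supp a}. b \<beta> * a (\<mu> - \<beta>))"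
    by (rule sum.reindex_bij_witness[of _ "\<lambda>\<beta>. \<mu> - \<beta>" "\<lambda>\<alpha>. \<mu> - \<alpha>"]) auto
  finally show "gps_times a b \<mu> = gps_times b a \<mu>" by (simp add: gps_times_def)
qed

lemma gps_times_one: "gps_times gps_one a = a"
proof
  fix \<mu>
  have "gps_times gps_one a \<mu> = gps_one 0 * a (\<mu> - 0)"
    by (rule gps_times_single) (auto simp: gps_one_def)
  then show "gps_times gps_one a \<mu> = a \<mu>" by (simp add: gps_one_def)
qed

lemma gps_times_distrib:
  assumes "is_gps a" "is_gps b" "is_gps c"
  shows "gps_times (\<lambda>\<mu>. a \<mu> + b \<mu>) c = (\<lambda>\<mu>. gps_times a c \<mu> + gps_times b c \<mu>)"
proof
  fix \<mu>
  let ?S = "{\<alpha> \<in> gps_supp a. \<mu> - \<alpha> \<in> gps_supp c} \<union> {\<alpha> \<in> gps_supp b. \<mu> - \<alpha> \<in> gps_supp c}"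
  have f: "finite ?S" using times_set_finite assms by blast
  have "gps_times (\<lambda>\<mu>. a \<mu> + b \<mu>) c \<mu> = (\<Sum>\<alpha>\<in>?S. (a \<alpha> + b \<alpha>) * c (\<mu> - \<alpha>))"
    by (rule gps_times_eq[OF f]) auto
  also have "\<dots> = (\<Sum>\<alpha>\<in>?S. a \<alpha> * c (\<mu> - \<alpha>)) + (\<Sum>\<alpha>\<in>?S. b \<alpha> * c (\<mu> - \<alpha>))"
    by (simp add: distrib_right sum.distrib)
  also have "\<dots> = gps_times a c \<mu> + gps_times b c \<mu>"
    by (subst (1 2) gps_times_eq[OF f]) auto
  finally show "gps_times (\<lambda>\<mu>. a \<mu> + b \<mu>) c \<mu> = gps_times a c \<mu> + gps_times b c \<mu>" .
qed

lemma gps_times_assoc: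
  assumes a: "is_gps a" and b: "is_gps b" and c: "is_gps c"
  shows "gps_times (gps_times a b) c = gps_times a (gps_times b c)"
proof
  fix \<mu>
  let ?T = "{(\<alpha>,\<beta>,\<gamma>). a \<alpha> \<noteq> 0 \<and> b \<beta> \<noteq> 0 \<and> c \<gamma> \<noteq> 0 \<and> \<alpha> + \<beta> + \<gamma> = \<mu>}"
  obtain ma where ma: "\<forall>\<beta>\<in>gps_supp a. ma \<le> \<beta>" using gps_lower_bound[OF a] by blast
  obtain mb where mb: "\<forall>\<beta>\<in>gps_supp b. mb \<le> \<beta>" using gps_lower_bound[OF b] by blast
  obtain mc where mc: "\<forall>\<beta>\<in>gps_supp c. mc \<le> \<beta>" using gps_lower_bound[OF c] by blast
  have "?T \<subseteq> {\<alpha>. a \<alpha> \<noteq> 0 \<and> \<alpha> \<le> \<mu> - mb - mc} \<times> {\<beta>. b \<beta> \<noteq> 0 \<and> \<beta> \<le> \<mu> - ma - mc} \<times> {\<gamma>. c \<gamma> \<noteq> 0 \<and> \<gamma> \<le> \<mu> - ma - mb}"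
  proof
    fix t assume "t \<in> ?T"
    then obtain x y z where t: "t = (x,y,z)" and h: "a x \<noteq> 0" "b y \<noteq> 0" "c z \<noteq> 0" "x + y + z = \<mu>" by auto
    have "ma \<le> x" "mb \<le> y" "mc \<le> z" using h ma mb mc by auto
    then show "t \<in> {\<alpha>. a \<alpha> \<noteq> 0 \<and> \<alpha> \<le> \<mu> - mb - mc} \<times> {\<beta>. b \<beta> \<noteq> 0 \<and> \<beta> \<le> \<mu> - ma - mc} \<times> {\<gamma>. c \<gamma> \<noteq> 0 \<and> \<gamma> \<le> \<mu> - ma - mb}"
      using h t by auto
  qed
  then have fT: "finite ?T"
    using gps_finite_le[OF a] gps_finite_le[OF b] gps_finite_le[OF c] by (meson finite_SigmaI finite_subset)
  let ?X = "{\<gamma>. c (\<mu> - \<gamma>) \<noteq> 0 \<and> (\<exists>\<alpha>. a \<alpha> \<noteq> 0 \<and> b (\<gamma> - \<alpha>) \<noteq> 0)}"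
  have X: "?X \<subseteq> (\<lambda>(\<alpha>,\<beta>,\<gamma>). \<alpha> + \<beta>) ` ?T"
  proof
    fix \<gamma> assume "\<gamma> \<in> ?X"
    then obtain \<alpha> where "c (\<mu> - \<gamma>) \<noteq> 0" "a \<alpha> \<noteq> 0" "b (\<gamma> - \<alpha>) \<noteq> 0" by auto
    then show "\<gamma> \<in> (\<lambda>(\<alpha>,\<beta>,\<gamma>). \<alpha> + \<beta>) ` ?T"
      by (intro image_eqI[of _ _ "(\<alpha>, \<gamma> - \<alpha>, \<mu> - \<gamma>)"]) auto
  qed
  have fX: "finite ?X" using fT X finite_subset finite_imageI by blast
  let ?Y = "\<lambda>\<gamma>. {\<alpha> \<in> gps_supp a. \<gamma> - \<alpha> \<in> gps_supp b}"
  have "gps_times (gps_times a b) c \<mu> = (\<Sum>\<gamma>\<in>?X. gps_times a b \<gamma> * c (\<mu> - \<gamma>))"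
  proof (rule gps_times_eq)
    show "finite ?X" using fX .
    show "{\<gamma> \<in> gps_supp (gps_times a b). \<mu> - \<gamma> \<in> gps_supp c} \<subseteq> ?X"
    proof
      fix \<gamma> assume "\<gamma> \<in> {\<gamma> \<in> gps_supp (gps_times a b). \<mu> - \<gamma> \<in> gps_supp c}"
      then have h: "gps_times a b \<gamma> \<noteq> 0" "c (\<mu> - \<gamma>) \<noteq> 0" by auto
      then obtain \<alpha> where "\<alpha> \<in> gps_supp a" "\<gamma> - \<alpha> \<in> gps_supp b"
        unfolding gps_times_def by (metis (no_types, lifting) empty_iff mem_Collect_eq sum.empty sum.neutral)
      then show "\<gamma> \<in> ?X" using h by auto
    qed
  qed
  also have "\<dots> = (\<Sum>\<gamma>\<in>?X. \<Sum>\<alpha>\<in>?Y \<gamma>. a \<alpha> * b (\<gamma> - \<alpha>) * c (\<mu> - \<gamma>))"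
    by (simp add: gps_times_def sum_distrib_right)
  also have "\<dots> = (\<Sum>(\<gamma>,\<alpha>)\<in>Sigma ?X ?Y. a \<alpha> * b (\<gamma> - \<alpha>) * c (\<mu> - \<gamma>))"
    using fX times_set_finite[OF a b] by (subst sum.Sigma) auto
  also have "\<dots> = (\<Sum>(\<alpha>,\<beta>,\<gamma>)\<in>?T. a \<alpha> * b \<beta> * c \<gamma>)"
    by (rule sum.reindex_bij_witness[of _ "\<lambda>(\<alpha>,\<beta>,\<gamma>). (\<alpha> + \<beta>, \<alpha>)" "\<lambda>(\<gamma>,\<alpha>). (\<alpha>, \<gamma> - \<alpha>, \<mu> - \<gamma>)"])
       (auto simp: algebra_simps)
  finally have L: "gps_times (gps_times a b) c \<mu> = (\<Sum>(\<alpha>,\<beta>,\<gamma>)\<in>?T. a \<alpha> * b \<beta> * c \<gamma>)" .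
  let ?X2 = "{\<alpha>. a \<alpha> \<noteq> 0 \<and> (\<exists>\<beta>. b \<beta> \<noteq> 0 \<and> c (\<mu> - \<alpha> - \<beta>) \<noteq> 0)}"
  have "?X2 \<subseteq> fst ` ?T"
  proof
    fix \<alpha> assume "\<alpha> \<in> ?X2"
    then obtain \<beta> where "a \<alpha> \<noteq> 0" "b \<beta> \<noteq> 0" "c (\<mu> - \<alpha> - \<beta>) \<noteq> 0" by auto
    then show "\<alpha> \<in> fst ` ?T"
      by (intro image_eqI[of _ _ "(\<alpha>, \<beta>, \<mu> - \<alpha> - \<beta>)"]) auto
  qed
  then have fX2: "finite ?X2" using fT finite_subset finite_imageI by blast
  let ?Y2 = "\<lambda>\<alpha>. {\<beta> \<in> gps_supp b. \<mu> - \<alpha> - \<beta> \<in> gps_supp c}"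
  have "gps_times a (gps_times b c) \<mu> = (\<Sum>\<alpha>\<in>?X2. a \<alpha> * gps_times b c (\<mu> - \<alpha>))"
  proof (rule gps_times_eq)
    show "finite ?X2" using fX2 .
    show "{\<alpha> \<in> gps_supp a. \<mu> - \<alpha> \<in> gps_supp (gps_times b c)} \<subseteq> ?X2"
    proof
      fix \<alpha> assume "\<alpha> \<in> {\<alpha> \<in> gps_supp a. \<mu> - \<alpha> \<in> gps_supp (gps_times b c)}"
      then have h: "gps_times b c (\<mu> - \<alpha>) \<noteq> 0" "a \<alpha> \<noteq> 0" by auto
      then obtain \<beta> where "\<beta> \<in> gps_supp b" "\<mu> - \<alpha> - \<beta> \<in> gps_supp c"
        unfolding gps_times_def by (metis (no_types, lifting) empty_iff mem_Collect_eq sum.empty sum.neutral)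
      then show "\<alpha> \<in> ?X2" using h by auto
    qed
  qed
  also have "\<dots> = (\<Sum>\<alpha>\<in>?X2. \<Sum>\<beta>\<in>?Y2 \<alpha>. a \<alpha> * b \<beta> * c (\<mu> - \<alpha> - \<beta>))"
    by (simp add: gps_times_def sum_distrib_left mult.assoc)
  also have "\<dots> = (\<Sum>(\<alpha>,\<beta>)\<in>Sigma ?X2 ?Y2. a \<alpha> * b \<beta> * c (\<mu> - \<alpha> - \<beta>))"
  proof (rule sum.Sigma)
    show "finite ?X2" using fX2 .
    show "\<forall>\<alpha>\<in>?X2. finite (?Y2 \<alpha>)" using times_set_finite[OF b c] by blast
  qed
  also have "\<dots> = (\<Sum>(\<alpha>,\<beta>,\<gamma>)\<in>?T. a \<alpha> * b \<beta> * c \<gamma>)"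
    by (rule sum.reindex_bij_witness[of _ "\<lambda>(\<alpha>,\<beta>,\<gamma>). (\<alpha>, \<beta>)" "\<lambda>(\<alpha>,\<beta>). (\<alpha>, \<beta>, \<mu> - \<alpha> - \<beta>)"])
       (auto simp: algebra_simps)
  finally show "gps_times (gps_times a b) c \<mu> = gps_times a (gps_times b c) \<mu>" using L by simp
qed

typedef G = "{s::gps. is_gps s}" morphisms gr ga
  using is_gps_zero by blast

setup_lifting type_definition_G

lemma is_gps_gr[simp]: "is_gps (gr x)" using gr by simp

instantiation G :: comm_ring_1
begin
lift_definition zero_G :: G is "\<lambda>_. 0" by (rule is_gps_zero)
lift_definition one_G :: G is gps_one by (rule is_gps_one)
lift_definition plus_G :: "G \<Rightarrow> G \<Rightarrow> G" is "\<lambda>a b \<mu>. a \<mu> + b \<mu>" by (rule is_gps_add)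
lift_definition uminus_G :: "G \<Rightarrow> G" is "\<lambda>a \<mu>. - a \<mu>"
  subgoal for a by (rule is_gps_subset[of a]) auto
  done
lift_definition minus_G :: "G \<Rightarrow> G \<Rightarrow> G" is "\<lambda>a b \<mu>. a \<mu> - b \<mu>"
proof -
  fix a b :: gps
  assume a: "is_gps a" and b: "is_gps b"
  have "is_gps (\<lambda>\<mu>. - b \<mu>)" using b by (rule is_gps_subset) auto
  from is_gps_add[OF a this] have "is_gps (\<lambda>\<mu>. a \<mu> + (- b \<mu>))" .
  then show "is_gps (\<lambda>\<mu>. a \<mu> - b \<mu>)" by simp
qed
lift_definition times_G :: "G \<Rightarrow> G \<Rightarrow> G" is gps_times by (rule is_gps_times)

instance
proof
  fix a b c :: G
  show "a * b * c = a * (b * c)"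
    unfolding gr_inject[symmetric] times_G.rep_eq by (rule gps_times_assoc) (use gr in auto)
  show "a * b = b * a"
    unfolding gr_inject[symmetric] times_G.rep_eq by (rule gps_times_comm) (use gr in auto)
  show "1 * a = a"
    unfolding gr_inject[symmetric] times_G.rep_eq one_G.rep_eq by (rule gps_times_one)
  show "(a + b) * c = a * c + b * c"
    unfolding gr_inject[symmetric] times_G.rep_eq plus_G.rep_eq by (rule gps_times_distrib) (use gr in auto)
  show "a + b + c = a + (b + c)"
    unfolding gr_inject[symmetric] plus_G.rep_eq by (simp add: add.assoc)
  show "a + b = b + a"
    unfolding gr_inject[symmetric] plus_G.rep_eq by (simp add: add.commute)
  show "0 + a = a"
    unfolding gr_inject[symmetric] plus_G.rep_eq zero_G.rep_eq by simp
  show "- a + a = 0"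
    unfolding gr_inject[symmetric] plus_G.rep_eq zero_G.rep_eq uminus_G.rep_eq by simp
  show "a - b = a + - b"
    unfolding gr_inject[symmetric] plus_G.rep_eq minus_G.rep_eq uminus_G.rep_eq by simp
  show "(0::G) \<noteq> 1"
    unfolding gr_inject[symmetric] zero_G.rep_eq one_G.rep_eq gps_one_def
    by (metis zero_neq_one)
qed
end

lemma gr_times: "gr (x * y) = gps_times (gr x) (gr y)" by transfer simp
lemma gr_plus: "gr (x + y) = (\<lambda>\<mu>. gr x \<mu> + gr y \<mu>)" by transfer simp
lemma gr_zero: "gr 0 = (\<lambda>_. 0)" by transfer simp
lemma gr_one: "gr 1 = gps_one" by transfer simp

lemma gr_sum: "gr (sum f A) \<mu> = (\<Sum>a\<in>A. gr (f a) \<mu>)"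
  by (induction A rule: infinite_finite_induct) (auto simp: gr_zero gr_plus)

lemma gr_eq_iff: "x = y \<longleftrightarrow> gr x = gr y" by (simp add: gr_inject)

lemma gps_pow_gr: "gps_pow (gr x) k = gr (x ^ k)"
  by (induction k) (auto simp: gps_pow_def gr_times gr_one)

lift_definition constG :: "complex \<Rightarrow> G" is "\<lambda>c \<mu>. if \<mu> = 0 then c else 0"
  by (rule is_gps_subset[OF is_gps_one]) (auto simp: gps_one_def split: if_splits)

lemma gr_const_times: "gr (constG c * x) \<mu> = c * gr x \<mu>"
proof -
  have "gr (constG c * x) \<mu> = gr (constG c) 0 * gr x (\<mu> - 0)"
    unfolding gr_times by (rule gps_times_single) (auto simp: constG.rep_eq)
  then show ?thesis by (simp add: constG.rep_eq)
qed

lemma constG_nonzero: "c \<noteq> 0 \<Longrightarrow> constG c \<noteq> 0"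
  by (metis constG.rep_eq gr_zero)

lemma constG_one: "constG 1 = 1"
  by (simp add: gr_eq_iff constG.rep_eq gr_one gps_one_def)

definition wk :: "opkind \<Rightarrow> real \<Rightarrow> complex" where
  "wk k \<mu> = (case k of Deriv \<Rightarrow> complex_of_real (\<mu> + 1) | Euler \<Rightarrow> complex_of_real \<mu>
     | QDiff q \<Rightarrow> q powr complex_of_real \<mu>)"
definition tk :: "opkind \<Rightarrow> real" where
  "tk k = (case k of Deriv \<Rightarrow> 1 | _ \<Rightarrow> 0)"

lemma gps_op_eq: "gps_op k s \<mu> = wk k \<mu> * s (\<mu> + tk k)"
  by (cases k) (auto simp: gps_op_def wk_def tk_def)

lemma is_gps_shift:
  assumes "is_gps s" shows "is_gps (\<lambda>\<mu>. w \<mu> * s (\<mu> + t))"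
  unfolding is_gps_def
proof
  fix M
  have "{\<mu> \<in> gps_supp (\<lambda>\<mu>. w \<mu> * s (\<mu> + t)). \<mu> \<le> M} \<subseteq> (\<lambda>x. x - t) ` {x. s x \<noteq> 0 \<and> x \<le> M + t}"
    by (auto intro!: image_eqI[where x="_ + t"])
  then show "finite {\<mu> \<in> gps_supp (\<lambda>\<mu>. w \<mu> * s (\<mu> + t)). \<mu> \<le> M}"
    using gps_finite_le[OF assms] finite_subset by blast
qed

lift_definition opG :: "opkind \<Rightarrow> G \<Rightarrow> G" is gps_op
  unfolding gps_op_eq[abs_def] by (rule is_gps_shift)

lemma gr_opG: "gr (opG k x) \<mu> = wk k \<mu> * gr x (\<mu> + tk k)"
  by (simp add: opG.rep_eq gps_op_eq)

lemma gr_opG_pow: "gr ((opG k ^^ j) x) \<mu> = (\<Prod>i<j. wk k (\<mu> + real i * tk k)) * gr x (\<mu> + real j * tk k)"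
proof (induction j arbitrary: \<mu>)
  case 0 then show ?case by simp
next
  case (Suc j)
  have "gr ((opG k ^^ Suc j) x) \<mu> = wk k \<mu> * gr ((opG k ^^ j) x) (\<mu> + tk k)"
    by (simp add: gr_opG)
  also have "\<dots> = wk k \<mu> * ((\<Prod>i<j. wk k (\<mu> + tk k + real i * tk k)) * gr x (\<mu> + tk k + real j * tk k))"
    using Suc by simp
  also have "\<dots> = (\<Prod>i<Suc j. wk k (\<mu> + real i * tk k)) * gr x (\<mu> + real (Suc j) * tk k)"
    by (simp only: prod.lessThan_Suc_shift) (simp add: algebra_simps)
  finally show ?case .
qed

lemma gr_opG_pow': "(gps_op k ^^ j) (gr x) = gr ((opG k ^^ j) x)"
  by (induction j) (auto simp: opG.rep_eq)

lemma constG_mult: "constG (a * b) = constG a * constG b"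
  unfolding gr_eq_iff by (rule ext) (simp add: gr_const_times constG.rep_eq)

lemma constG_add: "constG (a + b) = constG a + constG b"
  unfolding gr_eq_iff by (rule ext) (simp add: gr_plus constG.rep_eq)

lemma constG_zero: "constG 0 = 0"
  by (simp add: gr_eq_iff gr_zero constG.rep_eq)

lemma of_nat_constG: "(of_nat m :: G) = constG (of_nat m)"
  by (induction m) (simp_all add: constG_zero constG_add constG_one)

definition is_der :: "(G \<Rightarrow> G) \<Rightarrow> bool" where
  "is_der \<delta> \<longleftrightarrow> (\<forall>x y. \<delta> (x + y) = \<delta> x + \<delta> y) \<and> (\<forall>x y. \<delta> (x * y) = \<delta> x * y + x * \<delta> y)
     \<and> (\<forall>c. \<delta> (constG c) = 0)"

context fixes \<delta> assumes der: "is_der \<delta>"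
begin

lemma der_add: "\<delta> (x + y) = \<delta> x + \<delta> y" using der by (simp add: is_der_def)
lemma der_mult: "\<delta> (x * y) = \<delta> x * y + x * \<delta> y" using der by (simp add: is_der_def)
lemma der_const: "\<delta> (constG c) = 0" using der by (simp add: is_der_def)

lemma der_zero: "\<delta> 0 = 0"
  using der_add[of 0 0] by simp

lemma der_sum: "\<delta> (sum f A) = (\<Sum>a\<in>A. \<delta> (f a))"
  by (induction A rule: infinite_finite_induct) (simp_all add: der_zero der_add)

lemma der_const_mult: "\<delta> (constG c * x) = constG c * \<delta> x"
  by (simp add: der_mult der_const)

lemma der_power: "\<delta> (x ^ m) = of_nat m * x ^ (m - 1) * \<delta> x"
proof (induction m)
  case 0 then show ?case using der_const[of 1] by (simp add: constG_one)
next
  case (Suc m)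
  show ?case
  proof (cases m)
    case 0 then show ?thesis by simp
  next
    case (Suc m')
    then show ?thesis using Suc.IH by (simp add: der_mult algebra_simps)
  qed
qed

lemma der_prod:
  assumes "finite I"
  shows "\<delta> (\<Prod>i\<in>I. g i) = (\<Sum>j\<in>I. \<delta> (g j) * (\<Prod>i\<in>I - {j}. g i))"
  using assms
proof (induction I rule: finite_induct)
  case empty then show ?case using der_const[of 1] by (simp add: constG_one)
next
  case (insert a I)
  have "\<delta> (\<Prod>i\<in>insert a I. g i) = \<delta> (g a) * (\<Prod>i\<in>I. g i) + g a * \<delta> (\<Prod>i\<in>I. g i)"
    using insert by (simp add: der_mult)
  also have "\<dots> = \<delta> (g a) * (\<Prod>i\<in>I. g i) + (\<Sum>j\<in>I. \<delta> (g j) * (g a * (\<Prod>i\<in>I - {j}. g i)))"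
    using insert by (simp add: sum_distrib_left algebra_simps)
  also have "(\<Sum>j\<in>I. \<delta> (g j) * (g a * (\<Prod>i\<in>I - {j}. g i))) = (\<Sum>j\<in>I. \<delta> (g j) * (\<Prod>i\<in>insert a I - {j}. g i))"
  proof (rule sum.cong)
    fix j assume "j \<in> I"
    then have "insert a I - {j} = insert a (I - {j})" "a \<notin> I - {j}" using insert by auto
    then show "\<delta> (g j) * (g a * (\<Prod>i\<in>I - {j}. g i)) = \<delta> (g j) * (\<Prod>i\<in>insert a I - {j}. g i)"
      using insert by simp
  qed simp
  finally show ?case using insert by (simp add: insert_Diff_if)
qed

end

definition fk :: "opkind \<Rightarrow> G \<Rightarrow> nat \<Rightarrow> G" where
  "fk k S i = (opG k ^^ i) S"

definition MG :: "opkind \<Rightarrow> G \<Rightarrow> nat list \<Rightarrow> G" where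
  "MG k S \<alpha> = (\<Prod>i<length \<alpha>. fk k S i ^ (\<alpha> ! i))"

definition EV :: "opkind \<Rightarrow> G \<Rightarrow> (nat list \<Rightarrow> complex) \<Rightarrow> G" where
  "EV k S P = (\<Sum>\<alpha>\<in>{\<alpha>. P \<alpha> \<noteq> 0}. constG (P \<alpha>) * MG k S \<alpha>)"

lemma foldr_prod:
  "distinct xs \<Longrightarrow> foldr (\<lambda>i acc. F i * acc) xs (1::'a::comm_monoid_mult) = prod F (set xs)"
  by (induction xs) auto

lemma gps_monomial_eq: "gps_monomial k (gr S) \<alpha> = gr (MG k S \<alpha>)"
proof -
  have "foldr (\<lambda>i acc. gps_times (gps_pow ((gps_op k ^^ i) (gr S)) (\<alpha> ! i)) acc) xs gps_one
      = gr (foldr (\<lambda>i acc. fk k S i ^ (\<alpha> ! i) * acc) xs 1)" for xs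
    by (induction xs) (simp_all add: gr_one gr_times gr_opG_pow' gps_pow_gr fk_def)
  then show ?thesis
    unfolding gps_monomial_def MG_def by (simp add: foldr_prod atLeast0LessThan)
qed

lemma gps_eval_eq:
  assumes "finite {\<alpha>. P \<alpha> \<noteq> 0}"
  shows "gps_eval k P (gr S) = gr (EV k S P)"
  unfolding gps_eval_def EV_def
  by (rule ext) (simp add: gr_sum gr_const_times gps_monomial_eq)

definition dQ :: "nat \<Rightarrow> nat \<Rightarrow> (nat list \<Rightarrow> complex) \<Rightarrow> nat list \<Rightarrow> complex" where
  "dQ n j P \<beta> = (if length \<beta> = Suc n then of_nat (\<beta> ! j + 1) * P (\<beta>[j := \<beta> ! j + 1]) else 0)"

lemma der_MG:
  assumes der: "is_der \<delta>" and comm: "\<And>x. \<delta> (opG k x) = opG k (\<delta> x)"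
  shows "\<delta> (MG k S \<alpha>) = (\<Sum>j<length \<alpha>. constG (of_nat (\<alpha> ! j)) * MG k S (\<alpha>[j := \<alpha> ! j - 1]) * fk k (\<delta> S) j)"
proof -
  have dfk: "\<delta> (fk k S j) = fk k (\<delta> S) j" for j
    by (induction j) (simp_all add: fk_def comm)
  have "\<delta> (MG k S \<alpha>) = (\<Sum>j<length \<alpha>. \<delta> (fk k S j ^ (\<alpha> ! j)) * (\<Prod>i\<in>{..<length \<alpha>} - {j}. fk k S i ^ (\<alpha> ! i)))"
    unfolding MG_def by (rule der_prod[OF der]) simp
  also have "\<dots> = (\<Sum>j<length \<alpha>. constG (of_nat (\<alpha> ! j)) * MG k S (\<alpha>[j := \<alpha> ! j - 1]) * fk k (\<delta> S) j)"
  proof (rule sum.cong)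
    fix j assume j: "j \<in> {..<length \<alpha>}"
    have "MG k S (\<alpha>[j := \<alpha> ! j - 1]) = fk k S j ^ (\<alpha> ! j - 1) * (\<Prod>i\<in>{..<length \<alpha>} - {j}. fk k S (i) ^ (\<alpha>[j := \<alpha> ! j - 1] ! i))"
      unfolding MG_def using j by (simp add: prod.remove[of _ j])
    also have "(\<Prod>i\<in>{..<length \<alpha>} - {j}. fk k S (i) ^ (\<alpha>[j := \<alpha> ! j - 1] ! i)) = (\<Prod>i\<in>{..<length \<alpha>} - {j}. fk k S i ^ (\<alpha> ! i))"
      by (rule prod.cong) auto
    finally show "\<delta> (fk k S j ^ (\<alpha> ! j)) * (\<Prod>i\<in>{..<length \<alpha>} - {j}. fk k S i ^ (\<alpha> ! i)) =
        constG (of_nat (\<alpha> ! j)) * MG k S (\<alpha>[j := \<alpha> ! j - 1]) * fk k (\<delta> S) j"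
      by (simp add: der_power[OF der] dfk of_nat_constG algebra_simps)
  qed simp
  finally show ?thesis .
qed

lemma der_EV:
  assumes der: "is_der \<delta>" and comm: "\<And>x. \<delta> (opG k x) = opG k (\<delta> x)"
    and P: "is_poly_order n P"
  shows "\<delta> (EV k S P) = (\<Sum>j<Suc n. EV k S (dQ n j P) * fk k (\<delta> S) j)"
proof -
  let ?A = "{\<alpha>. P \<alpha> \<noteq> 0}"
  have fA: "finite ?A" and lenA: "\<And>\<alpha>. \<alpha> \<in> ?A \<Longrightarrow> length \<alpha> = Suc n"
    using P by (auto simp: is_poly_order_def)
  have "\<delta> (EV k S P) = (\<Sum>\<alpha>\<in>?A. constG (P \<alpha>) * \<delta> (MG k S \<alpha>))"
    unfolding EV_def by (simp add: der_sum[OF der] der_const_mult[OF der])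
  also have "\<dots> = (\<Sum>\<alpha>\<in>?A. \<Sum>j<Suc n. constG (P \<alpha> * of_nat (\<alpha> ! j)) * MG k S (\<alpha>[j := \<alpha> ! j - 1]) * fk k (\<delta> S) j)"
    by (rule sum.cong) (simp_all add: der_MG[OF der comm] lenA sum_distrib_left constG_mult mult.assoc del: sum.lessThan_Suc)
  also have "\<dots> = (\<Sum>j<Suc n. (\<Sum>\<alpha>\<in>?A. constG (P \<alpha> * of_nat (\<alpha> ! j)) * MG k S (\<alpha>[j := \<alpha> ! j - 1])) * fk k (\<delta> S) j)"
    by (subst sum.swap) (simp add: sum_distrib_right)
  also have "\<dots> = (\<Sum>j<Suc n. EV k S (dQ n j P) * fk k (\<delta> S) j)"
  proof (rule sum.cong[OF refl])
    fix j assume j: "j \<in> {..<Suc n}"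
    let ?A' = "{\<alpha> \<in> ?A. \<alpha> ! j \<noteq> 0}"
    have "(\<Sum>\<alpha>\<in>?A. constG (P \<alpha> * of_nat (\<alpha> ! j)) * MG k S (\<alpha>[j := \<alpha> ! j - 1]))
        = (\<Sum>\<alpha>\<in>?A'. constG (P \<alpha> * of_nat (\<alpha> ! j)) * MG k S (\<alpha>[j := \<alpha> ! j - 1]))"
      by (rule sum.mono_neutral_right[OF fA]) (auto simp: constG_zero, (metis constG_zero mult_zero_left mult_zero_right of_nat_0 gr0I))
    also have "\<dots> = (\<Sum>\<beta>\<in>{\<beta>. dQ n j P \<beta> \<noteq> 0}. constG (dQ n j P \<beta>) * MG k S \<beta>)"
    proof (rule sum.reindex_bij_witness[of _ "\<lambda>\<beta>. \<beta>[j := \<beta> ! j + 1]" "\<lambda>\<alpha>. \<alpha>[j := \<alpha> ! j - 1]"])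
      fix \<alpha> assume a: "\<alpha> \<in> ?A'"
      then have l: "length \<alpha> = Suc n" using lenA by auto
      then have jl: "j < length \<alpha>" using j by auto
      show "(\<alpha>[j := \<alpha> ! j - 1])[j := (\<alpha>[j := \<alpha> ! j - 1]) ! j + 1] = \<alpha>"
        using a jl by auto
      show "\<alpha>[j := \<alpha> ! j - 1] \<in> {\<beta>. dQ n j P \<beta> \<noteq> 0}"
        using a jl l by (auto simp: dQ_def)
      show "constG (dQ n j P (\<alpha>[j := \<alpha> ! j - 1])) * MG k S (\<alpha>[j := \<alpha> ! j - 1]) =
          constG (P \<alpha> * of_nat (\<alpha> ! j)) * MG k S (\<alpha>[j := \<alpha> ! j - 1])"
        using a jl l by (auto simp: dQ_def mult.commute)
    next
      fix \<beta> assume b: "\<beta> \<in> {\<beta>. dQ n j P \<beta> \<noteq> 0}"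
      then have l: "length \<beta> = Suc n" by (auto simp: dQ_def split: if_splits)
      then have jl: "j < length \<beta>" using j by auto
      show "(\<beta>[j := \<beta> ! j + 1])[j := (\<beta>[j := \<beta> ! j + 1]) ! j - 1] = \<beta>"
        using jl by auto
      show "\<beta>[j := \<beta> ! j + 1] \<in> ?A'"
        using b jl l by (auto simp: dQ_def)
    qed
    finally show "(\<Sum>\<alpha>\<in>?A. constG (P \<alpha> * of_nat (\<alpha> ! j)) * MG k S (\<alpha>[j := \<alpha> ! j - 1])) * fk k (\<delta> S) j =
        EV k S (dQ n j P) * fk k (\<delta> S) j"
      by (simp add: EV_def)
  qed
  finally show ?thesis .
qed

lift_definition dphi :: "(real \<Rightarrow> real) \<Rightarrow> G \<Rightarrow> G" is "\<lambda>\<phi> s \<mu>. complex_of_real (\<phi> \<mu>) * s \<mu>"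
  by (rule is_gps_scale)

lemma gr_dphi: "gr (dphi \<phi> x) \<mu> = complex_of_real (\<phi> \<mu>) * gr x \<mu>"
  by (simp add: dphi.rep_eq)

lemma is_der_dphi:
  assumes add: "\<And>x y. \<phi> (x + y) = \<phi> x + \<phi> y"
  shows "is_der (dphi \<phi>)"
proof -
  have phi0: "\<phi> 0 = 0" using add[of 0 0] by simp
  have mult: "dphi \<phi> (x * y) = dphi \<phi> x * y + x * dphi \<phi> y" for x y
  proof -
    let ?a = "gr x" and ?b = "gr y"
    let ?S = "\<lambda>\<mu>. {\<alpha> \<in> gps_supp ?a. \<mu> - \<alpha> \<in> gps_supp ?b}"
    have fS: "finite (?S \<mu>)" for \<mu> by (rule times_set_finite) simp_all
    show ?thesis unfolding gr_eq_iff
    proof (rule ext)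
      fix \<mu>
      have 1: "gr (dphi \<phi> x * y) \<mu> = (\<Sum>\<alpha>\<in>?S \<mu>. gr (dphi \<phi> x) \<alpha> * ?b (\<mu> - \<alpha>))"
        unfolding gr_times by (rule gps_times_eq[OF fS]) (auto simp: gr_dphi)
      have 2: "gr (x * dphi \<phi> y) \<mu> = (\<Sum>\<alpha>\<in>?S \<mu>. ?a \<alpha> * gr (dphi \<phi> y) (\<mu> - \<alpha>))"
        unfolding gr_times by (rule gps_times_eq[OF fS]) (auto simp: gr_dphi)
      have 3: "gr (dphi \<phi> (x * y)) \<mu> = (\<Sum>\<alpha>\<in>?S \<mu>. complex_of_real (\<phi> \<mu>) * (?a \<alpha> * ?b (\<mu> - \<alpha>)))"
        by (simp add: gr_dphi gr_times gps_times_def sum_distrib_left)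
      have e: "complex_of_real (\<phi> \<mu>) = complex_of_real (\<phi> \<alpha>) + complex_of_real (\<phi> (\<mu> - \<alpha>))" for \<alpha>
        using add[of \<alpha> "\<mu> - \<alpha>"] by simp
      show "gr (dphi \<phi> (x * y)) \<mu> = gr (dphi \<phi> x * y + x * dphi \<phi> y) \<mu>"
        unfolding gr_plus 1 2 3 sum.distrib[symmetric]
      proof (rule sum.cong[OF refl])
        fix \<alpha>
        show "complex_of_real (\<phi> \<mu>) * (?a \<alpha> * ?b (\<mu> - \<alpha>)) = gr (dphi \<phi> x) \<alpha> * ?b (\<mu> - \<alpha>) + ?a \<alpha> * gr (dphi \<phi> y) (\<mu> - \<alpha>)"
          unfolding gr_dphi e[of \<alpha>] by (simp add: algebra_simps)
      qed
    qed
  qed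
  show ?thesis unfolding is_der_def
    by (auto simp: mult gr_eq_iff gr_plus gr_dphi algebra_simps constG.rep_eq phi0 gr_zero)
qed

lemma dphi_comm:
  assumes add: "\<And>x y. \<phi> (x + y) = \<phi> x + \<phi> y" and t: "\<phi> (tk k) = 0"
  shows "dphi \<phi> (opG k x) = opG k (dphi \<phi> x)"
  unfolding gr_eq_iff
proof (rule ext)
  fix \<mu>
  show "gr (dphi \<phi> (opG k x)) \<mu> = gr (opG k (dphi \<phi> x)) \<mu>"
    using add[of \<mu> "tk k"] t by (simp add: gr_dphi gr_opG)
qed

lemma tk_cases: "tk k = 0 \<or> k = Deriv"
  by (cases k) (auto simp: tk_def)

lemma is_der_Deriv: "is_der (opG Deriv)"
proof -
  have mult: "opG Deriv (x * y) = opG Deriv x * y + x * opG Deriv y" for x y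
  proof -
    let ?a = "gr x" and ?b = "gr y"
    show ?thesis unfolding gr_eq_iff
    proof (rule ext)
      fix \<mu>
      let ?S = "{\<alpha> \<in> gps_supp ?a. \<mu> + 1 - \<alpha> \<in> gps_supp ?b}"
      have fS: "finite ?S" using times_set_finite[of ?a ?b "\<mu> + 1"] by simp
      have "gr (opG Deriv x * y) \<mu> = (\<Sum>\<alpha>'\<in>(\<lambda>\<alpha>. \<alpha> - 1) ` ?S. gr (opG Deriv x) \<alpha>' * ?b (\<mu> - \<alpha>'))"
        unfolding gr_times
      proof (rule gps_times_eq)
        show "finite ((\<lambda>\<alpha>. \<alpha> - 1) ` ?S)" using fS by simp
        show "{\<alpha> \<in> gps_supp (gr (opG Deriv x)). \<mu> - \<alpha> \<in> gps_supp ?b} \<subseteq> (\<lambda>\<alpha>. \<alpha> - 1) ` ?S"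
          by (auto simp: gr_opG wk_def tk_def intro!: image_eqI[where x="_ + 1"])
      qed
      also have "\<dots> = (\<Sum>\<alpha>\<in>?S. complex_of_real \<alpha> * ?a \<alpha> * ?b (\<mu> + 1 - \<alpha>))"
        by (subst sum.reindex) (auto simp: inj_on_def gr_opG wk_def tk_def algebra_simps)
      finally have 1: "gr (opG Deriv x * y) \<mu> = (\<Sum>\<alpha>\<in>?S. complex_of_real \<alpha> * ?a \<alpha> * ?b (\<mu> + 1 - \<alpha>))" .
      have "gr (x * opG Deriv y) \<mu> = (\<Sum>\<alpha>\<in>?S. ?a \<alpha> * gr (opG Deriv y) (\<mu> - \<alpha>))"
        unfolding gr_times
        by (rule gps_times_eq[OF fS]) (auto simp: gr_opG wk_def tk_def algebra_simps)
      also have "\<dots> = (\<Sum>\<alpha>\<in>?S. ?a \<alpha> * (complex_of_real (\<mu> + 1 - \<alpha>) * ?b (\<mu> + 1 - \<alpha>)))"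
        by (rule sum.cong) (auto simp: gr_opG wk_def tk_def algebra_simps)
      finally have 2: "gr (x * opG Deriv y) \<mu> = (\<Sum>\<alpha>\<in>?S. ?a \<alpha> * (complex_of_real (\<mu> + 1 - \<alpha>) * ?b (\<mu> + 1 - \<alpha>)))" .
      have 3: "gr (opG Deriv (x * y)) \<mu> = (\<Sum>\<alpha>\<in>?S. complex_of_real (\<mu> + 1) * (?a \<alpha> * ?b (\<mu> + 1 - \<alpha>)))"
        by (simp add: gr_opG wk_def tk_def gr_times gps_times_def sum_distrib_left)
      show "gr (opG Deriv (x * y)) \<mu> = gr (opG Deriv x * y + x * opG Deriv y) \<mu>"
        unfolding gr_plus 1 2 3 sum.distrib[symmetric]
        by (rule sum.cong) (simp_all add: algebra_simps)
    qed
  qed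
  have c: "opG Deriv (constG c) = 0" for c
    unfolding gr_eq_iff
  proof (rule ext)
    fix \<mu>
    show "gr (opG Deriv (constG c)) \<mu> = gr 0 \<mu>"
    proof (cases "\<mu> + 1 = 0")
      case True then have "\<mu> = -1" by simp
      then show ?thesis by (simp add: gr_opG wk_def tk_def gr_zero)
    qed (simp add: gr_opG wk_def tk_def constG.rep_eq gr_zero)
  qed
  have a: "opG Deriv (x + y) = opG Deriv x + opG Deriv y" for x y
    unfolding gr_eq_iff by (rule ext) (auto simp: gr_opG gr_plus algebra_simps)
  show ?thesis unfolding is_der_def using mult c a by blast
qed

definition zk :: "opkind \<Rightarrow> real \<Rightarrow> complex" where
  "zk k \<mu> = (case k of QDiff q \<Rightarrow> q powr complex_of_real \<mu> | _ \<Rightarrow> complex_of_real \<mu>)"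

definition cc :: "opkind \<Rightarrow> nat \<Rightarrow> nat \<Rightarrow> complex" where
  "cc k j i = (if k = Deriv then complex_of_real (real i + 1 - real j) else 0)"

definition Wk :: "opkind \<Rightarrow> nat \<Rightarrow> real \<Rightarrow> complex" where
  "Wk k j \<gamma> = (\<Prod>i<j. wk k (\<gamma> + real i * tk k))"

definition Bk :: "opkind \<Rightarrow> nat \<Rightarrow> complex poly" where
  "Bk k j = (\<Prod>i<j. [:cc k j i, 1:])"

lemma Wk_poly: "Wk k j (\<mu> - real j * tk k) = poly (Bk k j) (zk k \<mu>)"
  unfolding Wk_def Bk_def poly_prod
proof (rule prod.cong[OF refl])
  fix i assume "i \<in> {..<j}"
  show "wk k (\<mu> - real j * tk k + real i * tk k) = poly [:cc k j i, 1:] (zk k \<mu>)"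
    by (cases k) (simp_all add: wk_def tk_def cc_def zk_def algebra_simps)
qed

lemma monic_prod:
  "degree (\<Prod>i<j. [:c i, 1::complex:]) = j \<and> coeff (\<Prod>i<j. [:c i, 1::complex:]) j = 1"
proof (induction j)
  case 0 then show ?case by simp
next
  case (Suc j)
  let ?p = "\<Prod>i<j. [:c i, 1::complex:]"
  have nz: "?p \<noteq> 0" using Suc by auto
  have d: "degree (?p * [:c j, 1:]) = Suc j"
  proof -
    have "[:c j, 1::complex:] \<noteq> 0" by simp
    then have "degree (?p * [:c j, 1:]) = degree ?p + degree [:c j, 1::complex:]" by (rule degree_mult_eq[OF nz])
    moreover have "degree [:c j, 1::complex:] = 1" by simp
    ultimately show ?thesis using Suc by linarith
  qed
  have "coeff (?p * [:c j, 1:]) (Suc j) = lead_coeff ?p * lead_coeff [:c j, 1:]"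
    using d lead_coeff_mult[of ?p "[:c j, 1:]"] by simp
  then show ?case using d Suc by (simp add: mult.commute)
qed

lemma Bk_deg: "degree (Bk k j) = j" and Bk_coeff: "coeff (Bk k j) j = 1"
  using monic_prod[of "cc k j" j] by (simp_all add: Bk_def)

lemma zk_inj:
  assumes "admissible_op k" shows "inj (zk k)"
proof (cases k)
  case (QDiff q)
  then have q: "q \<noteq> 0" "norm q \<noteq> 1" using assms by (auto simp: admissible_op_def)
  show ?thesis
  proof (rule injI)
    fix x y assume "zk k x = zk k y"
    then have "norm (q powr complex_of_real x) = norm (q powr complex_of_real y)"
      using QDiff by (simp add: zk_def)
    then have "norm q powr x = norm q powr y"
      by (simp add: norm_powr_real_powr')
    then show "x = y" using q by (simp add: powr_inj)
  qed
qed (auto simp: zk_def inj_def)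

lemma roots_bound:
  assumes adm: "admissible_op k" and nz: "\<exists>j<Suc n. c j \<noteq> 0"
  defines "R \<equiv> \<lambda>\<mu>. \<Sum>j<Suc n. c j * Wk k j (\<mu> - real j * tk k)"
  shows "finite {\<mu>. R \<mu> = 0} \<and> card {\<mu>. R \<mu> = 0} \<le> n"
proof -
  define p where "p = (\<Sum>j<Suc n. smult (c j) (Bk k j))"
  have Rp: "R \<mu> = poly p (zk k \<mu>)" for \<mu>
    by (simp add: R_def p_def poly_sum Wk_poly)
  define J where "J = {j. j < Suc n \<and> c j \<noteq> 0}"
  have fJ: "finite J" and neJ: "J \<noteq> {}" using nz by (auto simp: J_def)
  define j0 where "j0 = Max J"
  have j0: "j0 \<in> J" and j0max: "\<And>j. j \<in> J \<Longrightarrow> j \<le> j0"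
    using Max_in[OF fJ neJ] Max_ge[OF fJ] by (auto simp: j0_def)
  have "coeff p j0 = (\<Sum>j<Suc n. c j * coeff (Bk k j) j0)"
    by (simp add: p_def coeff_sum)
  also have "\<dots> = c j0 * coeff (Bk k j0) j0 + (\<Sum>j\<in>{..<Suc n} - {j0}. c j * coeff (Bk k j) j0)"
    using j0 by (subst sum.remove[of _ j0]) (auto simp: J_def)
  also have "(\<Sum>j\<in>{..<Suc n} - {j0}. c j * coeff (Bk k j) j0) = 0"
  proof (rule sum.neutral, rule ballI)
    fix j assume j: "j \<in> {..<Suc n} - {j0}"
    show "c j * coeff (Bk k j) j0 = 0"
    proof (cases "j < j0")
      case True then show ?thesis by (simp add: coeff_eq_0 Bk_deg)
    next
      case False
      then have "j \<notin> J" using j j0max by force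
      then show ?thesis using j by (auto simp: J_def)
    qed
  qed
  finally have "coeff p j0 = c j0" by (simp add: Bk_coeff)
  then have pnz: "p \<noteq> 0" using j0 by (auto simp: J_def)
  have pdeg: "degree p \<le> n"
    unfolding p_def
    by (rule degree_sum_le) (auto intro: order.trans[OF degree_smult_le] simp: Bk_deg)
  have fin: "finite {x. poly p x = 0}" using poly_roots_finite[OF pnz] .
  have inj: "inj (zk k)" using zk_inj[OF adm] .
  have sub: "zk k ` {\<mu>. R \<mu> = 0} \<subseteq> {x. poly p x = 0}" by (auto simp: Rp)
  have "finite {\<mu>. R \<mu> = 0}"
    using finite_imageD[OF finite_subset[OF sub fin]] inj by (auto intro: inj_on_subset)
  moreover have "card {\<mu>. R \<mu> = 0} \<le> card {x. poly p x = 0}"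
    by (rule card_inj_on_le[OF _ sub fin]) (rule inj_on_subset[OF inj], simp)
  ultimately show ?thesis using card_poly_roots_bound[OF pnz] pdeg by linarith
qed

lemma L1:
  fixes a :: "nat \<Rightarrow> G" and m :: real
  assumes lowb: "\<And>j \<beta>. j < Suc n \<Longrightarrow> gr (a j) \<beta> \<noteq> 0 \<Longrightarrow> m + real j * tk k \<le> \<beta>"
    and low: "\<And>\<mu>'. \<mu>' < \<mu> \<Longrightarrow> gr g \<mu>' = 0"
  shows "gr (\<Sum>j<Suc n. a j * fk k g j) (m + \<mu>)
    = (\<Sum>j<Suc n. gr (a j) (m + real j * tk k) * Wk k j (\<mu> - real j * tk k)) * gr g \<mu>"
  unfolding gr_sum sum_distrib_right
proof (rule sum.cong[OF refl])
  fix j assume j: "j \<in> {..<Suc n}"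
  have fkj: "gr (fk k g j) x = Wk k j x * gr g (x + real j * tk k)" for x
    by (simp add: fk_def gr_opG_pow Wk_def)
  have "gr (a j * fk k g j) (m + \<mu>) = gr (a j) (m + real j * tk k) * gr (fk k g j) (m + \<mu> - (m + real j * tk k))"
    unfolding gr_times
  proof (rule gps_times_single, rule subsetI)
    fix \<beta> assume "\<beta> \<in> {\<alpha> \<in> gps_supp (gr (a j)). m + \<mu> - \<alpha> \<in> gps_supp (gr (fk k g j))}"
    then have b1: "gr (a j) \<beta> \<noteq> 0" and b2: "gr g (m + \<mu> - \<beta> + real j * tk k) \<noteq> 0"
      by (auto simp: fkj)
    have "m + real j * tk k \<le> \<beta>" using lowb[OF _ b1] j by auto
    moreover have "\<not> (m + \<mu> - \<beta> + real j * tk k < \<mu>)" using low b2 by blast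
    ultimately show "\<beta> \<in> {m + real j * tk k}" by auto
  qed
  also have "\<dots> = gr (a j) (m + real j * tk k) * Wk k j (\<mu> - real j * tk k) * gr g \<mu>"
    by (simp add: fkj)
  finally show "gr (a j * fk k g j) (m + \<mu>) = gr (a j) (m + real j * tk k) * Wk k j (\<mu> - real j * tk k) * gr g \<mu>" .
qed

interpretation Qv: vector_space "\<lambda>(r::rat) (x::real). real_of_rat r * x"
  by unfold_locales (simp_all add: algebra_simps of_rat_add of_rat_mult)

interpretation QQ: vector_space_pair "\<lambda>(r::rat) (x::real). real_of_rat r * x" "\<lambda>(r::rat) (x::real). real_of_rat r * x"
  by unfold_locales

lemma rat_indep_independent:
  assumes "rat_indep B" "finite B" shows "Qv.independent B"
proof
  assume "Qv.dependent B"
  then obtain t u where t: "finite t" "t \<subseteq> B" "(\<Sum>v\<in>t. real_of_rat (u v) * v) = 0" and v: "\<exists>v\<in>t. u v \<noteq> 0"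
    unfolding Qv.dependent_explicit by blast
  define r where "r v = (if v \<in> t then u v else 0)" for v
  have "(\<Sum>b\<in>B. real_of_rat (r b) * b) = (\<Sum>b\<in>t. real_of_rat (r b) * b)"
    by (rule sum.mono_neutral_right[OF assms(2) t(2)]) (auto simp: r_def)
  also have "\<dots> = 0" using t(3) by (simp add: r_def)
  finally have "\<forall>b\<in>B. r b = 0" using assms(1) unfolding rat_indep_def by blast
  moreover obtain v where "v \<in> t" "u v \<noteq> 0" using v by blast
  ultimately show False using t(2) unfolding r_def by (metis subsetD)
qed

lemma phi_exists:
  assumes "\<mu> \<notin> Qv.span T"
  shows "\<exists>\<phi>::real\<Rightarrow>real. (\<forall>x y. \<phi> (x + y) = \<phi> x + \<phi> y) \<and> \<phi> \<mu> = 1 \<and> (\<forall>x\<in>T. \<phi> x = 0)"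
proof -
  obtain B0 where B0: "B0 \<subseteq> T" "Qv.independent B0" "T \<subseteq> Qv.span B0"
    by (rule Qv.maximal_independent_subset)
  have "Qv.span B0 \<subseteq> Qv.span T" using B0(1) by (rule Qv.span_mono)
  then have mu: "\<mu> \<notin> Qv.span B0" using assms by blast
  then have muB0: "\<mu> \<notin> B0" using Qv.span_base by blast
  define B where "B = insert \<mu> B0"
  have iB: "Qv.independent B" unfolding B_def by (rule Qv.independent_insertI[OF mu B0(2)])
  define \<phi> where "\<phi> = QQ.construct B (\<lambda>b. if b = \<mu> then 1 else 0)"
  have lin: "Vector_Spaces.linear (\<lambda>(r::rat) (x::real). real_of_rat r * x) (\<lambda>(r::rat) (x::real). real_of_rat r * x) \<phi>"
    unfolding \<phi>_def by (rule QQ.linear_construct[OF iB])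
  have add: "\<phi> (x + y) = \<phi> x + \<phi> y" for x y by (rule QQ.linear_add[OF lin])
  have one: "\<phi> \<mu> = 1" unfolding \<phi>_def using QQ.construct_basis[OF iB] by (simp add: B_def)
  have zB0: "\<phi> b = 0" if "b \<in> B0" for b
    unfolding \<phi>_def using QQ.construct_basis[OF iB] that muB0 by (auto simp: B_def)
  have "\<phi> x = 0" if "x \<in> T" for x
    using QQ.linear_eq_0_on_span[OF lin zB0] B0(3) that by blast
  then show ?thesis using add one by (intro exI[of _ \<phi>]) auto
qed

lemma gr_nonzero_ex: "x \<noteq> 0 \<Longrightarrow> \<exists>\<mu>. gr x \<mu> \<noteq> 0"
  by (metis ext gr_eq_iff gr_zero)

lemma KEY:
  assumes adm: "admissible_op k"
    and qd: "qdim_gt (gps_supp (gr S)) n"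
    and anz: "\<exists>j<Suc n. a j \<noteq> 0"
    and H: "\<And>\<delta>. is_der \<delta> \<Longrightarrow> (\<And>x. \<delta> (opG k x) = opG k (\<delta> x)) \<Longrightarrow> (\<Sum>j<Suc n. a j * fk k (\<delta> S) j) = 0"
  shows False
proof -
  define s where "s = gr S"
  have gs: "is_gps s" by (simp add: s_def)
  define J where "J = {j. j < Suc n \<and> a j \<noteq> 0}"
  have fJ: "finite J" and neJ: "J \<noteq> {}" using anz by (auto simp: J_def)
  have "\<forall>j\<in>J. \<exists>m0. gr (a j) m0 \<noteq> 0 \<and> (\<forall>\<beta>. gr (a j) \<beta> \<noteq> 0 \<longrightarrow> m0 \<le> \<beta>)"
  proof
    fix j assume "j \<in> J"
    then obtain \<mu>0 where "gr (a j) \<mu>0 \<noteq> 0" using gr_nonzero_ex by (auto simp: J_def)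
    then have "\<mu>0 \<in> gps_supp (gr (a j))" by simp
    from gps_min[OF is_gps_gr this] show "\<exists>m0. gr (a j) m0 \<noteq> 0 \<and> (\<forall>\<beta>. gr (a j) \<beta> \<noteq> 0 \<longrightarrow> m0 \<le> \<beta>)"
      by auto
  qed
  from bchoice[OF this] obtain mm where mm0: "\<forall>j\<in>J. gr (a j) (mm j) \<noteq> 0 \<and> (\<forall>\<beta>. gr (a j) \<beta> \<noteq> 0 \<longrightarrow> mm j \<le> \<beta>)"
    by blast
  have mm: "\<And>j. j \<in> J \<Longrightarrow> gr (a j) (mm j) \<noteq> 0"
    "\<And>j \<beta>. j \<in> J \<Longrightarrow> gr (a j) \<beta> \<noteq> 0 \<Longrightarrow> mm j \<le> \<beta>"
    using mm0 by blast+
  define m where "m = Min ((\<lambda>j. mm j - real j * tk k) ` J)"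
  have lowb: "m + real j * tk k \<le> \<beta>" if "j < Suc n" "gr (a j) \<beta> \<noteq> 0" for j \<beta>
  proof -
    have "a j \<noteq> 0" using that(2) gr_zero by auto
    then have jJ: "j \<in> J" using that(1) by (simp add: J_def)
    have "m \<le> mm j - real j * tk k" unfolding m_def using fJ jJ by (intro Min_le) auto
    then show ?thesis using mm(2)[OF jJ that(2)] by linarith
  qed
  have "m \<in> (\<lambda>j. mm j - real j * tk k) ` J" unfolding m_def using fJ neJ by (intro Min_in) simp_all
  then obtain j0 where j0: "j0 \<in> J" "m = mm j0 - real j0 * tk k" by (rule imageE) simp
  define c where "c j = gr (a j) (m + real j * tk k)" for j
  have cnz: "\<exists>j<Suc n. c j \<noteq> 0"
  proof -
    have "c j0 = gr (a j0) (mm j0)" using j0(2) by (simp add: c_def)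
    then have "c j0 \<noteq> 0" using mm(1)[OF j0(1)] by simp
    moreover have "j0 < Suc n" using j0(1) by (simp add: J_def)
    ultimately show ?thesis by blast
  qed
  define R where "R \<mu> = (\<Sum>j<Suc n. c j * Wk k j (\<mu> - real j * tk k))" for \<mu>
  have rb: "finite {\<mu>. R \<mu> = 0}" "card {\<mu>. R \<mu> = 0} \<le> n"
    using roots_bound[OF adm cnz] unfolding R_def by auto
  have root: "R \<mu> = 0" if der: "is_der \<delta>" and comm: "\<And>x. \<delta> (opG k x) = opG k (\<delta> x)"
    and low: "\<And>\<mu>'. \<mu>' < \<mu> \<Longrightarrow> gr (\<delta> S) \<mu>' = 0" and nz: "gr (\<delta> S) \<mu> \<noteq> 0" for \<delta> \<mu>
  proof -
    have "gr (\<Sum>j<Suc n. a j * fk k (\<delta> S) j) (m + \<mu>) = R \<mu> * gr (\<delta> S) \<mu>"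
      unfolding R_def c_def by (rule L1[OF lowb low]) auto
    then have "R \<mu> * gr (\<delta> S) \<mu> = 0" using H[OF der comm] by (simp add: gr_zero)
    then show ?thesis using nz by simp
  qed
  define E where "E = (if k = Deriv then {1::real} else {})"
  define N where "N = {\<mu>. s \<mu> \<noteq> 0 \<and> \<mu> \<notin> Qv.span (E \<union> {\<mu>'. s \<mu>' \<noteq> 0 \<and> \<mu>' < \<mu>})}"
  have Nroot: "R \<mu> = 0" if "\<mu> \<in> N" for \<mu>
  proof -
    let ?T = "E \<union> {\<mu>'. s \<mu>' \<noteq> 0 \<and> \<mu>' < \<mu>}"
    have nsp: "\<mu> \<notin> Qv.span ?T" and sm: "s \<mu> \<noteq> 0" using that by (auto simp: N_def)
    obtain \<phi> :: "real \<Rightarrow> real" where add: "\<And>x y. \<phi> (x + y) = \<phi> x + \<phi> y"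
      and one: "\<phi> \<mu> = 1" and zT: "\<And>x. x \<in> ?T \<Longrightarrow> \<phi> x = 0"
      using phi_exists[OF nsp] by blast
    have phi0: "\<phi> 0 = 0" using add[of 0 0] by simp
    have t: "\<phi> (tk k) = 0"
    proof (cases "k = Deriv")
      case True then show ?thesis using zT[of 1] by (simp add: E_def tk_def)
    next
      case False then show ?thesis using phi0 by (cases k) (auto simp: tk_def)
    qed
    show ?thesis
    proof (rule root[of "dphi \<phi>"])
      show "is_der (dphi \<phi>)" by (rule is_der_dphi[OF add])
      show "dphi \<phi> (opG k x) = opG k (dphi \<phi> x)" for x by (rule dphi_comm[OF add t])
      show "gr (dphi \<phi> S) \<mu>' = 0" if "\<mu>' < \<mu>" for \<mu>'
        using that zT[of \<mu>'] by (auto simp: gr_dphi s_def)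
      show "gr (dphi \<phi> S) \<mu> \<noteq> 0" using sm one by (simp add: gr_dphi s_def)
    qed
  qed
  obtain B where B: "B \<subseteq> gps_supp s" "finite B" "card B = Suc n" "rat_indep B"
    using qd unfolding qdim_gt_def s_def by blast
  have iB: "Qv.independent B" by (rule rat_indep_independent[OF B(4) B(2)])
  show False
  proof (cases "finite N")
    case False
    have "N \<subseteq> {\<mu>. R \<mu> = 0}" using Nroot by blast
    then have "infinite {\<mu>. R \<mu> = 0}" using infinite_super False by blast
    then show False using rb(1) by simp
  next
    case fN: True
    have all: "s \<mu> \<noteq> 0 \<longrightarrow> \<mu> \<in> Qv.span (E \<union> N)" if "card {x. s x \<noteq> 0 \<and> x < \<mu>} = K" for K \<mu>
      using that
    proof (induction K arbitrary: \<mu> rule: less_induct)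
      case (less K)
      show ?case
      proof
        assume sm: "s \<mu> \<noteq> 0"
        show "\<mu> \<in> Qv.span (E \<union> N)"
        proof (cases "\<mu> \<in> N")
          case True then show ?thesis by (simp add: Qv.span_base)
        next
          case False
          then have mu: "\<mu> \<in> Qv.span (E \<union> {\<mu>'. s \<mu>' \<noteq> 0 \<and> \<mu>' < \<mu>})" using sm by (simp add: N_def)
          have "E \<union> {\<mu>'. s \<mu>' \<noteq> 0 \<and> \<mu>' < \<mu>} \<subseteq> Qv.span (E \<union> N)"
          proof
            fix x assume x: "x \<in> E \<union> {\<mu>'. s \<mu>' \<noteq> 0 \<and> \<mu>' < \<mu>}"
            show "x \<in> Qv.span (E \<union> N)"
            proof (cases "x \<in> E")
              case True then show ?thesis by (simp add: Qv.span_base)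
            next
              case False
              then have sx: "s x \<noteq> 0" and xl: "x < \<mu>" using x by auto
              have fin: "finite {y. s y \<noteq> 0 \<and> y < \<mu>}"
                using gps_finite_le[OF gs, of \<mu>] by (rule finite_subset[rotated]) auto
              have "{y. s y \<noteq> 0 \<and> y < x} \<subset> {y. s y \<noteq> 0 \<and> y < \<mu>}" using sx xl by auto
              then have "card {y. s y \<noteq> 0 \<and> y < x} < K" using psubset_card_mono[OF fin] less.prems by simp
              then have "s x \<noteq> 0 \<longrightarrow> x \<in> Qv.span (E \<union> N)" by (rule less.IH[OF _ refl])
              then show ?thesis using sx by blast
            qed
          qed
          then have "Qv.span (E \<union> {\<mu>'. s \<mu>' \<noteq> 0 \<and> \<mu>' < \<mu>}) \<subseteq> Qv.span (E \<union> N)"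
            by (rule Qv.span_minimal) simp
          then show ?thesis using mu by blast
        qed
      qed
    qed
    have fEN: "finite (E \<union> N)" using fN by (simp add: E_def)
    have "B \<subseteq> Qv.span (E \<union> N)" using B(1) all by auto
    then have "card B \<le> card (E \<union> N)" using Qv.independent_span_bound[OF fEN iB] by simp
    also have "\<dots> \<le> card E + card N" by (rule card_Un_le)
    finally have cardN: "Suc n \<le> card E + card N" using B(3) by simp
    show False
    proof (cases "k = Deriv")
      case False
      then have "Suc n \<le> card N" using cardN by (simp add: E_def)
      moreover have "card N \<le> card {\<mu>. R \<mu> = 0}" using Nroot rb(1) by (intro card_mono) auto
      ultimately show False using rb(2) by simp
    next
      case kD: True
      then have cN: "n \<le> card N" using cardN by (simp add: E_def)
      define s0 where "s0 \<mu> = (if \<mu> = 0 then 0 else s \<mu>)" for \<mu>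
      have gs0: "is_gps s0" by (rule is_gps_subset[OF gs]) (simp add: s0_def split: if_splits)
      have "B \<noteq> {}" using B(3) by auto
      then obtain b where b: "b \<in> B" by blast
      have "b \<noteq> 0" using b iB Qv.dependent_zero by blast
      then have "b \<in> gps_supp s0" using b B(1) by (auto simp: s0_def)
      from gps_min[OF gs0 this] obtain \<mu>1 where mu1: "s0 \<mu>1 \<noteq> 0" "\<And>\<mu>. s0 \<mu> \<noteq> 0 \<Longrightarrow> \<mu>1 \<le> \<mu>"
        by auto
      have mu1': "\<mu>1 \<noteq> 0" "s \<mu>1 \<noteq> 0" using mu1(1) by (auto simp: s0_def split: if_splits)
      have extra: "R (\<mu>1 - 1) = 0"
      proof (rule root[of "opG Deriv"])
        show "is_der (opG Deriv)" by (rule is_der_Deriv)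
        show "opG Deriv (opG k x) = opG k (opG Deriv x)" for x using kD by simp
        show "gr (opG Deriv S) \<mu>' = 0" if "\<mu>' < \<mu>1 - 1" for \<mu>'
        proof (cases "\<mu>' + 1 = 0")
          case True then show ?thesis by (simp add: gr_opG wk_def tk_def)
        next
          case False
          have "s0 (\<mu>' + 1) = 0" using mu1(2)[of "\<mu>' + 1"] that by force
          then have "s (\<mu>' + 1) = 0" using False by (simp add: s0_def)
          then show ?thesis by (simp add: gr_opG wk_def tk_def s_def)
        qed
        show "gr (opG Deriv S) (\<mu>1 - 1) \<noteq> 0"
          using mu1' by (simp add: gr_opG wk_def tk_def s_def)
      qed
      have notN: "\<mu>1 - 1 \<notin> N"
      proof
        assume "\<mu>1 - 1 \<in> N"
        then have "s (\<mu>1 - 1) \<noteq> 0" "\<mu>1 - 1 \<noteq> 0" using Qv.span_zero by (auto simp: N_def)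
        then have "s0 (\<mu>1 - 1) \<noteq> 0" by (simp add: s0_def)
        then show False using mu1(2)[OF \<open>s0 (\<mu>1 - 1) \<noteq> 0\<close>] by linarith
      qed
      have "card (insert (\<mu>1 - 1) N) \<le> card {\<mu>. R \<mu> = 0}"
        using Nroot extra rb(1) by (intro card_mono) auto
      moreover have "card (insert (\<mu>1 - 1) N) = Suc (card N)" using notN fN by simp
      ultimately show False using rb(2) cN by simp
    qed
  qed
qed

lemma sum_list_upd_Suc:
  "j < length xs \<Longrightarrow> sum_list (xs[j := xs ! j + 1]) = sum_list xs + (1::nat)"
proof (induction xs arbitrary: j)
  case Nil then show ?case by simp
next
  case (Cons x xs) then show ?case by (cases j) auto
qed

lemma EV_const:
  assumes "\<forall>\<alpha>. P \<alpha> \<noteq> 0 \<longrightarrow> \<alpha> = replicate m 0" and "P \<alpha>0 \<noteq> 0"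
  shows "EV k S P \<noteq> 0"
proof -
  have a0: "\<alpha>0 = replicate m 0" using assms by blast
  have "{\<alpha>. P \<alpha> \<noteq> 0} = {\<alpha>0}"
  proof
    show "{\<alpha>. P \<alpha> \<noteq> 0} \<subseteq> {\<alpha>0}" using assms(1) a0 by blast
    show "{\<alpha>0} \<subseteq> {\<alpha>. P \<alpha> \<noteq> 0}" using assms(2) by blast
  qed
  then have "EV k S P = constG (P \<alpha>0) * MG k S \<alpha>0" by (simp add: EV_def)
  also have "MG k S \<alpha>0 = 1" unfolding a0 MG_def by (rule prod.neutral) simp
  finally show ?thesis using constG_nonzero[OF assms(2)] by simp
qed

lemma find_pos:
  assumes "is_poly_order n P" "P \<alpha> \<noteq> 0" "\<alpha> \<noteq> replicate (Suc n) 0"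
  shows "length \<alpha> = Suc n \<and> (\<exists>j<Suc n. \<alpha> ! j \<noteq> 0)"
proof -
  have l: "length \<alpha> = Suc n" using assms by (auto simp: is_poly_order_def)
  moreover have "\<exists>j<Suc n. \<alpha> ! j \<noteq> 0"
  proof (rule ccontr)
    assume "\<not> ?thesis"
    then have "\<alpha> = replicate (Suc n) 0" using l by (simp add: list_eq_iff_nth_eq del: replicate_Suc)
    then show False using assms(3) by simp
  qed
  ultimately show ?thesis by blast
qed

lemma dQ_props:
  assumes P: "is_poly_order n P" and deg: "\<forall>\<alpha>. P \<alpha> \<noteq> 0 \<longrightarrow> sum_list \<alpha> \<le> D"
    and a: "P \<alpha> \<noteq> 0" "length \<alpha> = Suc n" and j: "j < Suc n" "\<alpha> ! j \<noteq> 0"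
  shows "is_poly_order n (dQ n j P)" "dQ n j P (\<alpha>[j := \<alpha> ! j - 1]) \<noteq> 0"
    "\<And>\<beta>. dQ n j P \<beta> \<noteq> 0 \<Longrightarrow> sum_list \<beta> + 1 \<le> D"
proof -
  have sub: "{\<beta>. dQ n j P \<beta> \<noteq> 0} \<subseteq> (\<lambda>\<alpha>. \<alpha>[j := \<alpha> ! j - 1]) ` {\<alpha>. P \<alpha> \<noteq> 0}"
  proof
    fix \<beta> assume "\<beta> \<in> {\<beta>. dQ n j P \<beta> \<noteq> 0}"
    then have "length \<beta> = Suc n" "P (\<beta>[j := \<beta> ! j + 1]) \<noteq> 0" by (auto simp: dQ_def split: if_splits)
    then show "\<beta> \<in> (\<lambda>\<alpha>. \<alpha>[j := \<alpha> ! j - 1]) ` {\<alpha>. P \<alpha> \<noteq> 0}"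
      using j by (intro image_eqI[of _ _ "\<beta>[j := \<beta> ! j + 1]"]) auto
  qed
  have "finite {\<alpha>. P \<alpha> \<noteq> 0}" using P by (simp add: is_poly_order_def)
  then have "finite {\<beta>. dQ n j P \<beta> \<noteq> 0}" using finite_subset[OF sub] by blast
  then show "is_poly_order n (dQ n j P)"
    unfolding is_poly_order_def by (intro conjI allI impI) (simp_all add: dQ_def split: if_splits)
  have "(\<alpha>[j := \<alpha> ! j - 1])[j := \<alpha> ! j] = \<alpha>" using a j by simp
  then show "dQ n j P (\<alpha>[j := \<alpha> ! j - 1]) \<noteq> 0" using a j by (simp add: dQ_def)
  show "sum_list \<beta> + 1 \<le> D" if b: "dQ n j P \<beta> \<noteq> 0" for \<beta>
  proof -
    have l: "length \<beta> = Suc n" and p: "P (\<beta>[j := \<beta> ! j + 1]) \<noteq> 0"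
      using b by (auto simp: dQ_def split: if_splits)
    show ?thesis using deg[rule_format, OF p] sum_list_upd_Suc[of j \<beta>] l j by simp
  qed
qed

lemma EV_nonzero:
  assumes adm: "admissible_op k" and qd: "qdim_gt (gps_supp (gr S)) n"
  shows "is_poly_order n P \<Longrightarrow> P \<alpha>0 \<noteq> 0 \<Longrightarrow> (\<forall>\<alpha>. P \<alpha> \<noteq> 0 \<longrightarrow> sum_list \<alpha> \<le> d) \<Longrightarrow> EV k S P \<noteq> 0"
proof (induction d arbitrary: P \<alpha>0)
  case (0 P \<alpha>0)
  show ?case
  proof (cases "\<forall>\<alpha>. P \<alpha> \<noteq> 0 \<longrightarrow> \<alpha> = replicate (Suc n) 0")
    case True
    from EV_const[OF True "0.prems"(2)] show ?thesis .
  next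
    case False
    then obtain \<alpha> where a: "P \<alpha> \<noteq> 0" "\<alpha> \<noteq> replicate (Suc n) 0" by blast
    then obtain j where "j < Suc n" "\<alpha> ! j \<noteq> 0" "length \<alpha> = Suc n" using find_pos[OF "0.prems"(1)] by blast
    then have "\<alpha> ! j \<le> sum_list \<alpha>" by (intro member_le_sum_list) auto
    moreover have "sum_list \<alpha> \<le> 0" using "0.prems"(3) a(1) by blast
    ultimately show ?thesis using \<open>\<alpha> ! j \<noteq> 0\<close> by simp
  qed
next
  case (Suc d P \<alpha>0)
  show ?case
  proof (cases "\<forall>\<alpha>. P \<alpha> \<noteq> 0 \<longrightarrow> \<alpha> = replicate (Suc n) 0")
    case True
    from EV_const[OF True Suc.prems(2)] show ?thesis .
  next
    case False
    then obtain \<alpha> where a: "P \<alpha> \<noteq> 0" "\<alpha> \<noteq> replicate (Suc n) 0" by blast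
    then obtain j where j: "j < Suc n" "\<alpha> ! j \<noteq> 0" and l: "length \<alpha> = Suc n"
      using find_pos[OF Suc.prems(1)] by blast
    have deg: "\<forall>\<alpha>. P \<alpha> \<noteq> 0 \<longrightarrow> sum_list \<alpha> \<le> Suc d" using Suc.prems(3) by blast
    note dq = dQ_props[OF Suc.prems(1) deg a(1) l j]
    have "\<forall>\<beta>. dQ n j P \<beta> \<noteq> 0 \<longrightarrow> sum_list \<beta> \<le> d"
    proof (intro allI impI)
      fix \<beta> assume "dQ n j P \<beta> \<noteq> 0"
      from dq(3)[OF this] show "sum_list \<beta> \<le> d" by simp
    qed
    from Suc.IH[OF dq(1) dq(2) this] have "EV k S (dQ n j P) \<noteq> 0" .
    show ?thesis
    proof
      assume ev0: "EV k S P = 0"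
      show False
      proof (rule KEY[OF adm qd, where a = "\<lambda>j. EV k S (dQ n j P)"])
        show "\<exists>j<Suc n. EV k S (dQ n j P) \<noteq> 0" using \<open>EV k S (dQ n j P) \<noteq> 0\<close> j by blast
        fix \<delta> assume der: "is_der \<delta>" and comm: "\<And>x. \<delta> (opG k x) = opG k (\<delta> x)"
        have "\<delta> (EV k S P) = (\<Sum>j<Suc n. EV k S (dQ n j P) * fk k (\<delta> S) j)"
          by (rule der_EV[OF der comm Suc.prems(1)])
        then show "(\<Sum>j<Suc n. EV k S (dQ n j P) * fk k (\<delta> S) j) = 0"
          using ev0 der_zero[OF der] by simp
      qed
    qed
  qed
qed

theorem corollary2:
  fixes s :: gps and n :: nat and k :: opkind and P :: "nat list \<Rightarrow> complex"
  assumes "is_gps s"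
    and "admissible_op k"
    and "qdim_gt (gps_supp s) n"
    and "is_poly_order n P"
    and "\<exists>\<alpha>. P \<alpha> \<noteq> 0"
  shows "gps_eval k P s \<noteq> (\<lambda>_. 0)"
proof -
  define S where "S = ga s"
  have sS: "gr S = s" using assms(1) by (simp add: S_def ga_inverse)
  obtain \<alpha>0 where a0: "P \<alpha>0 \<noteq> 0" using assms(5) by blast
  have fin: "finite {\<alpha>. P \<alpha> \<noteq> 0}" using assms(4) by (simp add: is_poly_order_def)
  define d where "d = Max (sum_list ` {\<alpha>. P \<alpha> \<noteq> 0})"
  have deg: "\<forall>\<alpha>. P \<alpha> \<noteq> 0 \<longrightarrow> sum_list \<alpha> \<le> d"
  proof (intro allI impI)
    fix \<alpha> assume "P \<alpha> \<noteq> 0"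
    then show "sum_list \<alpha> \<le> d" unfolding d_def using fin by (intro Max_ge) auto
  qed
  have "EV k S P \<noteq> 0"
    by (rule EV_nonzero[OF assms(2) _ assms(4) a0 deg]) (simp add: sS assms(3))
  then have "gr (EV k S P) \<noteq> (\<lambda>_. 0)" by (simp add: gr_eq_iff gr_zero)
  then show ?thesis using gps_eval_eq[OF fin, of k S] sS by simp
qed

end
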